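(* Let $n\geq1$ and let $e\in\mathbf{I}_n(\mathcal{AW})$ have parameters $(p,q)$. Then there are exactly $p+q$ sequences in $\mathbf{I}_{n+1}(\mathcal{AW})$ whose first $n$ entries form $e$; these are $(e_1,\ldots,e_n,b)$ with $0\leq b\leq\max\{e_{n-1},e_n\}+1$, and, as $b$ runs from $0$ to $\max\{e_{n-1},e_n\}+1$, their parameters are respectively $$(1,p),(2,p-1),\ldots,(p,1),\ (p+1,1),(p+2,1),\ldots,(p+q,1).$$
   Context: $\mathbf{I}_n$ is the set of inversion sequences $e=(e_1,\ldots,e_n)$ with $0\leq e_i<i$. $\mathbf{I}_n(\mathcal{AW})$ is the set of $e\in\mathbf{I}_n$ such that $e_i\leq\max\{e_{i-2},e_{i-1}\}+1$ for every $2<i\leq n$. The parameters of $e\in\mathbf{I}_n(\mathcal{AW})$ are $(p,q)$ with $p=e_n+1$ and $q=\max\{e_{n-1},e_n\}+1-e_n$, using the convention $e_0=0$ (so the sequence $(0)$ of length $1$ has parameters $(1,1)$). *)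

theory Defs
  imports Main
begin

text \<open>Sequences are lists of naturals; the paper's entry e_i (1-indexed) is e ! (i-1).\<close>

definition ent :: "nat list \<Rightarrow> nat \<Rightarrow> nat" where
  "ent e i = (if i = 0 then 0 else e ! (i - 1))"

definition inv_seqs :: "nat \<Rightarrow> nat list set" where
  "inv_seqs n = {e. length e = n \<and> (\<forall>i\<in>{1..n}. ent e i < i)}"

definition AW_seqs :: "nat \<Rightarrow> nat list set" where
  "AW_seqs n = {e \<in> inv_seqs n.
     \<forall>i. 2 < i \<and> i \<le> n \<longrightarrow> ent e i \<le> max (ent e (i - 2)) (ent e (i - 1)) + 1}"

definition params :: "nat list \<Rightarrow> nat \<times> nat" where
  "params e = (let n = length e in
     (ent e n + 1, max (ent e (n - 1)) (ent e n) + 1 - ent e n))"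

end

theory Submission
  imports Defs
begin

lemma ent_app1: "i \<le> length e \<Longrightarrow> ent (e @ [b]) i = ent e i"
  by (auto simp: ent_def nth_append)

lemma ent_app2: "ent (e @ [b]) (Suc (length e)) = b"
  by (simp add: ent_def)

lemma ent_lt: "e \<in> AW_seqs n \<Longrightarrow> 1 \<le> i \<Longrightarrow> i \<le> n \<Longrightarrow> ent e i < i"
  by (auto simp: AW_seqs_def inv_seqs_def)

lemma memb:
  assumes n: "n \<ge> 1" and e: "e \<in> AW_seqs n"
  shows "e @ [b] \<in> AW_seqs (Suc n) \<longleftrightarrow> b \<le> max (ent e (n - 1)) (ent e n) + 1"
proof -
  have len: "length e = n" using e by (simp add: AW_seqs_def inv_seqs_def)
  have h1: "ent e n < n" using ent_lt[OF e n] by simp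
  have h2: "ent e (n - 1) < n"
  proof (cases "n = 1")
    case True thus ?thesis by (simp add: ent_def)
  next
    case False then have "ent e (n - 1) < n - 1" using ent_lt[OF e, of "n - 1"] n by simp
    thus ?thesis by simp
  qed
  show ?thesis
  proof
    assume f: "e @ [b] \<in> AW_seqs (Suc n)"
    show "b \<le> max (ent e (n - 1)) (ent e n) + 1"
    proof (cases "n = 1")
      case True
      have "\<forall>i\<in>{1..Suc n}. ent (e @ [b]) i < i" using f by (simp add: AW_seqs_def inv_seqs_def)
      then have "ent (e @ [b]) 2 < 2" using True by (metis One_nat_def Suc_1 atLeastAtMost_iff le_refl one_le_numeral)
      moreover have "ent (e @ [b]) 2 = b" using ent_app2[of e b] len True by (simp add: numeral_2_eq_2)
      ultimately show ?thesis by simp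
    next
      case False
      then have "ent (e @ [b]) (Suc n) \<le> max (ent (e @ [b]) (Suc n - 2)) (ent (e @ [b]) (Suc n - 1)) + 1"
        using f n unfolding AW_seqs_def
      proof -
        have "\<forall>i. 2 < i \<and> i \<le> Suc n \<longrightarrow> ent (e @ [b]) i \<le> max (ent (e @ [b]) (i - 2)) (ent (e @ [b]) (i - 1)) + 1"
          using f unfolding AW_seqs_def by blast
        moreover have "2 < Suc n" using False n by simp
        ultimately show ?thesis by blast
      qed
      thus ?thesis using ent_app1[of _ e b] ent_app2[of e b] len n by simp
    qed
  next
    assume b: "b \<le> max (ent e (n - 1)) (ent e n) + 1"
    have inv: "e @ [b] \<in> inv_seqs (Suc n)"
      unfolding inv_seqs_def
    proof (intro CollectI conjI ballI)
      show "length (e @ [b]) = Suc n" using len by simp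
      fix i assume i: "i \<in> {1..Suc n}"
      show "ent (e @ [b]) i < i"
      proof (cases "i = Suc n")
        case True thus ?thesis using ent_app2[of e b] len b h1 h2 by simp
      next
        case False thus ?thesis using i ent_app1[of i e b] len ent_lt[OF e, of i] by simp
      qed
    qed
    show "e @ [b] \<in> AW_seqs (Suc n)"
      unfolding AW_seqs_def
    proof (intro CollectI conjI allI impI inv)
      fix i assume i: "2 < i \<and> i \<le> Suc n"
      show "ent (e @ [b]) i \<le> max (ent (e @ [b]) (i - 2)) (ent (e @ [b]) (i - 1)) + 1"
      proof (cases "i = Suc n")
        case True thus ?thesis using ent_app2[of e b] ent_app1[of _ e b] len b by simp
      next
        case False
        then have "ent e i \<le> max (ent e (i - 2)) (ent e (i - 1)) + 1"
          using e i by (auto simp: AW_seqs_def)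
        moreover have "ent (e @ [b]) (i - 2) = ent e (i - 2)" "ent (e @ [b]) (i - 1) = ent e (i - 1)" "ent (e @ [b]) i = ent e i"
          using False i ent_app1[of _ e b] len by auto
        ultimately show ?thesis by simp
      qed
    qed
  qed
qed

theorem lemma5p1:
  fixes n p q :: nat and e :: "nat list"
  assumes "n \<ge> 1" and "e \<in> AW_seqs n" and "params e = (p, q)"
  shows "card {f \<in> AW_seqs (Suc n). take n f = e} = p + q
    \<and> {f \<in> AW_seqs (Suc n). take n f = e}
        = {e @ [b] | b. b \<le> max (ent e (n - 1)) (ent e n) + 1}
    \<and> (\<forall>b \<le> max (ent e (n - 1)) (ent e n) + 1.
          params (e @ [b]) = (if b < p then (b + 1, p - b) else (b + 1, 1)))"
proof -
  define M where "M = max (ent e (n - 1)) (ent e n)"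
  have len: "length e = n" using assms(2) by (simp add: AW_seqs_def inv_seqs_def)
  have pq: "p = ent e n + 1" "q = M + 1 - ent e n"
    using assms(3) len by (auto simp: params_def M_def Let_def)
  have S: "{f \<in> AW_seqs (Suc n). take n f = e} = {e @ [b] | b. b \<le> M + 1}"
  proof (intro equalityI subsetI)
    fix f assume f: "f \<in> {f \<in> AW_seqs (Suc n). take n f = e}"
    then have lf: "length f = Suc n" by (simp add: AW_seqs_def inv_seqs_def)
    then have "f = take n f @ [f ! n]"
      by (metis lessI take_Suc_conv_app_nth take_all order_refl)
    then have fe: "f = e @ [f ! n]" using f by simp
    then have "f ! n \<le> M + 1" using memb[OF assms(1,2), of "f ! n"] f M_def by simp
    thus "f \<in> {e @ [b] | b. b \<le> M + 1}" using fe by blast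
  next
    fix f assume "f \<in> {e @ [b] | b. b \<le> M + 1}"
    then obtain b where "f = e @ [b]" "b \<le> M + 1" by blast
    thus "f \<in> {f \<in> AW_seqs (Suc n). take n f = e}"
      using memb[OF assms(1,2), of b] M_def len by simp
  qed
  have "{e @ [b] | b. b \<le> M + 1} = (\<lambda>b. e @ [b]) ` {..M + 1}" by auto
  then have C: "card {e @ [b] | b. b \<le> M + 1} = M + 2"
    by (simp add: card_image inj_on_def)
  have P: "\<forall>b \<le> M + 1. params (e @ [b]) = (if b < p then (b + 1, p - b) else (b + 1, 1))"
  proof (intro allI impI)
    fix b assume "b \<le> M + 1"
    have "params (e @ [b]) = (b + 1, max (ent e n) b + 1 - b)"
      using ent_app2[of e b] ent_app1[of n e b] len by (simp add: params_def Let_def)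
    thus "params (e @ [b]) = (if b < p then (b + 1, p - b) else (b + 1, 1))"
      using pq by auto
  qed
  have "M + 2 = p + q" using pq M_def by simp
  thus ?thesis using S C P M_def by simp
qed

end
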